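(* Let $b>\frac12$. There is $C>0$ such that for all $k\in\mathbb{Z}$ and all $u,v\in X^{0,b}$: \[ \|I_x^{1/2}I_{x,-}^{1/2}(P_{y,k}u,v)\|_{L^2_{t,x,y}}\le C\,2^{k/2}\|u\|_{0,b}\|v\|_{0,b}, \] \[ \|I_x^{1/2}I_{x,-}^{1/2}(u,P_{y,k}v)\|_{L^2_{t,x,y}}\le C\,2^{k/2}\|u\|_{0,b}\|v\|_{0,b}, \] \[ \|P_{y,k}I_x^{1/2}I_{x,-}^{1/2}(u,v)\|_{L^2_{t,x,y}}\le C\,2^{k/2}\|u\|_{0,b}\|v\|_{0,b}. \]
   Context: Notation: $\langle a\rangle=(1+|a|^2)^{1/2}$; $(\tau,\xi,\eta)$ are the Fourier variables dual to $(t,x,y)$, $\widehat u$ is the space-time Fourier transform. $X^{s,b}$ is the space of tempered distributions $u$ on $\mathbb{R}\times\mathbb{R}^2$ with $\widehat u\in L^2_{loc}$ and $\|u\|_{s,b}=\|\langle\tau-\xi^3-\eta^3\rangle^b\langle(\xi,\eta)\rangle^s\widehat u\|_{L^2_{\tau\xi\eta}}<\infty$. $I_x^{1/2}$ is the Fourier multiplier with symbol $|\xi|^{1/2}$ (in the spatial variable $x$). $P_{y,k}$ is the Fourier multiplier with symbol $\chi_{\{|\eta|\le2^k\}}$ (sharp cutoff). $I_{x,-}^{1/2}$ is the bilinear operator acting in the space variables (for each fixed $t$) by \[ \mathcal F_{x,y}\big(I_{x,-}^{1/2}(f_1,f_2)\big)(\xi,\eta)=\int_{\xi_1+\xi_2=\xi,\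 \eta_1+\eta_2=\eta}|\xi_1-\xi_2|^{1/2}\widehat{f_1}(\xi_1,\eta_1)\widehat{f_2}(\xi_2,\eta_2)\,d\xi_1d\eta_1 ; \] equivalently, in space-time Fourier variables, $\mathcal F\big(I_x^{1/2}I_{x,-}^{1/2}(u,v)\big)(\tau,\xi,\eta)=\int|\xi|^{1/2}|\xi_1-\xi_2|^{1/2}\widehat u(\tau_1,\xi_1,\eta_1)\widehat v(\tau-\tau_1,\xi-\xi_1,\eta-\eta_1)\,d\tau_1d\xi_1d\eta_1$ with $\xi_2=\xi-\xi_1$. *)

theory Defs
  imports "HOL-Analysis.Analysis"
begin

text \<open>Everything is expressed on the space-time Fourier side. A point of
  frequency space is w = (tau, xi, eta) :: real \<times> real \<times> real, and a space-time
  function u is represented by its Fourier transform f = u-hat.\<close>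

definition japanese :: "real \<Rightarrow> real" where
  "japanese a = sqrt (1 + a\<^sup>2)"

definition kdv_sym :: "real \<times> real \<times> real \<Rightarrow> real" where
  "kdv_sym w = fst w - (fst (snd w))^3 - (snd (snd w))^3"

definition Xsb_norm_sq :: "real \<Rightarrow> (real \<times> real \<times> real \<Rightarrow> complex) \<Rightarrow> ennreal" where
  "Xsb_norm_sq b f =
     (\<integral>\<^sup>+ w. ennreal ((japanese (kdv_sym w) powr b)\<^sup>2 * (cmod (f w))\<^sup>2) \<partial>lborel)"

definition in_X0b :: "real \<Rightarrow> (real \<times> real \<times> real \<Rightarrow> complex) \<Rightarrow> bool" where
  "in_X0b b f \<longleftrightarrow> f \<in> borel_measurable lborel \<and> Xsb_norm_sq b f < \<infinity>"

definition Xsb_norm :: "real \<Rightarrow> (real \<times> real \<times> real \<Rightarrow> complex) \<Rightarrow> real" where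
  "Xsb_norm b f = sqrt (enn2real (Xsb_norm_sq b f))"

text \<open>Fourier side of P_{y,k}: sharp cutoff |eta| \<le> 2^k.\<close>
definition Py :: "int \<Rightarrow> (real \<times> real \<times> real \<Rightarrow> complex) \<Rightarrow> (real \<times> real \<times> real \<Rightarrow> complex)" where
  "Py k f = (\<lambda>w. if \<bar>snd (snd w)\<bar> \<le> 2 powr (real_of_int k) then f w else 0)"

text \<open>Integrand of the Fourier transform of I_x^{1/2} I_{x,-}^{1/2}(u,v) at w,
  integrated over w1 = (tau1, xi1, eta1); here xi2 = xi - xi1.\<close>
definition bil_integrand ::
  "(real \<times> real \<times> real \<Rightarrow> complex) \<Rightarrow> (real \<times> real \<times> real \<Rightarrow> complex) \<Rightarrow>
   real \<times> real \<times> real \<Rightarrow> real \<times> real \<times> real \<Rightarrow> complex" where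
  "bil_integrand f g w w1 =
     complex_of_real (sqrt \<bar>fst (snd w)\<bar> *
        sqrt \<bar>fst (snd w1) - (fst (snd w) - fst (snd w1))\<bar>) * f w1 * g (w - w1)"

text \<open>Fourier transform of I_x^{1/2} I_{x,-}^{1/2}(u,v), given f = u-hat, g = v-hat.\<close>
definition bil :: "(real \<times> real \<times> real \<Rightarrow> complex) \<Rightarrow> (real \<times> real \<times> real \<Rightarrow> complex) \<Rightarrow>
   real \<times> real \<times> real \<Rightarrow> complex" where
  "bil f g = (\<lambda>w. \<integral> w1. bil_integrand f g w w1 \<partial>lborel)"

definition bil_defined :: "(real \<times> real \<times> real \<Rightarrow> complex) \<Rightarrow> (real \<times> real \<times> real \<Rightarrow> complex) \<Rightarrow> bool" where
  "bil_defined f g \<longleftrightarrow> (AE w in lborel. integrable lborel (bil_integrand f g w))"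

text \<open>Square of the L2 norm (by Plancherel, the L2_{t,x,y} norm up to a fixed constant).\<close>
definition L2_norm_sq :: "(real \<times> real \<times> real \<Rightarrow> complex) \<Rightarrow> ennreal" where
  "L2_norm_sq F = (\<integral>\<^sup>+ w. ennreal ((cmod (F w))\<^sup>2) \<partial>lborel)"

end

theory Submission
  imports Defs
begin


lemma fst_borel[measurable]: "(fst :: ('a::euclidean_space \<times> 'b::euclidean_space) \<Rightarrow> 'a) \<in> borel_measurable borel"
  by (intro borel_measurable_continuous_onI continuous_intros)
lemma snd_borel[measurable]: "(snd :: ('a::euclidean_space \<times> 'b::euclidean_space) \<Rightarrow> 'b) \<in> borel_measurable borel"
  by (intro borel_measurable_continuous_onI continuous_intros)

lemma nn_pair:
  fixes f :: "('a::euclidean_space \<times> 'b::euclidean_space) \<Rightarrow> ennreal"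
  assumes [measurable]: "f \<in> borel_measurable borel"
  shows "(\<integral>\<^sup>+z. f z \<partial>lborel) = (\<integral>\<^sup>+x. \<integral>\<^sup>+y. f (x,y) \<partial>lborel \<partial>lborel)"
proof -
  have m: "f \<in> borel_measurable (lborel \<Otimes>\<^sub>M lborel)" by (simp add: lborel_prod)
  show ?thesis
    by (subst lborel_prod[symmetric]) (rule lborel.nn_integral_fst[OF m, symmetric])
qed

lemma nn_swap:
  fixes f :: "'a::euclidean_space \<Rightarrow> 'b::euclidean_space \<Rightarrow> ennreal"
  assumes [measurable]: "(\<lambda>(x,y). f x y) \<in> borel_measurable borel"
  shows "(\<integral>\<^sup>+x. \<integral>\<^sup>+y. f x y \<partial>lborel \<partial>lborel) = (\<integral>\<^sup>+y. \<integral>\<^sup>+x. f x y \<partial>lborel \<partial>lborel)"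
proof -
  have m: "(\<lambda>(x,y). f x y) \<in> borel_measurable (lborel \<Otimes>\<^sub>M lborel)" by (simp add: lborel_prod)
  show ?thesis using lborel_pair.Fubini'[OF m] by simp
qed

lemma nn_triple:
  fixes h :: "real \<times> real \<times> real \<Rightarrow> ennreal"
  assumes [measurable]: "h \<in> borel_measurable borel"
  shows "(\<integral>\<^sup>+w. h w \<partial>lborel) = (\<integral>\<^sup>+e. \<integral>\<^sup>+x. \<integral>\<^sup>+t. h (t,x,e) \<partial>lborel \<partial>lborel \<partial>lborel)"
proof -
  have "(\<integral>\<^sup>+w. h w \<partial>lborel) = (\<integral>\<^sup>+t. \<integral>\<^sup>+p. h (t,p) \<partial>lborel \<partial>lborel)"
    by (rule nn_pair) simp
  also have "\<dots> = (\<integral>\<^sup>+p. \<integral>\<^sup>+t. h (t,p) \<partial>lborel \<partial>lborel)"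
    by (rule nn_swap) simp
  also have "\<dots> = (\<integral>\<^sup>+x. \<integral>\<^sup>+e. \<integral>\<^sup>+t. h (t,x,e) \<partial>lborel \<partial>lborel \<partial>lborel)"
    by (rule nn_pair) measurable
  also have "\<dots> = (\<integral>\<^sup>+e. \<integral>\<^sup>+x. \<integral>\<^sup>+t. h (t,x,e) \<partial>lborel \<partial>lborel \<partial>lborel)"
  proof (rule nn_swap)
    have "(\<lambda>(p,t). h (t,p)) \<in> borel_measurable (lborel \<Otimes>\<^sub>M lborel)"
      by (simp add: lborel_prod case_prod_beta')
    then have "(\<lambda>p. \<integral>\<^sup>+t. h (t,p) \<partial>lborel) \<in> borel_measurable lborel"
      by (rule lborel.borel_measurable_nn_integral[of "\<lambda>p t. h (t,p)", simplified])
    then show "(\<lambda>(x,e). \<integral>\<^sup>+t. h (t,x,e) \<partial>lborel) \<in> borel_measurable borel"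
      by (simp add: case_prod_beta')
  qed
  finally show ?thesis .
qed

lemma nn_translate:
  fixes h :: "'a::euclidean_space \<Rightarrow> ennreal"
  assumes [measurable]: "h \<in> borel_measurable borel"
  shows "(\<integral>\<^sup>+x. h (c + x) \<partial>lborel) = (\<integral>\<^sup>+x. h x \<partial>lborel)"
proof -
  have "(\<integral>\<^sup>+x. h x \<partial>lborel) = (\<integral>\<^sup>+x. h x \<partial>(distr lborel borel ((+) c)))"
    by (simp add: lborel_distr_plus)
  also have "\<dots> = (\<integral>\<^sup>+x. h (c + x) \<partial>lborel)"
    by (subst nn_integral_distr) auto
  finally show ?thesis ..
qed



definition phi :: "real \<Rightarrow> real \<Rightarrow> real" where
  "phi b s = (1 + s^2) powr (-b)"

lemma phi_nonneg: "0 \<le> phi b s" by (simp add: phi_def)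

lemma phi_cont_UNIV: "continuous_on A (phi b)"
  unfolding phi_def by (intro continuous_intros) (auto simp: add_pos_nonneg power2_eq_square, smt (verit) zero_le_square)

lemma phi_cont[continuous_intros]: "continuous_on A f \<Longrightarrow> continuous_on A (\<lambda>x. phi b (f x))"
  by (rule continuous_on_compose2[OF phi_cont_UNIV]) auto

lemma phi_meas[measurable]: "phi b \<in> borel_measurable borel"
  by (intro borel_measurable_continuous_onI phi_cont_UNIV)

lemma phi_le_powr:
  assumes "b \<ge> 0" "1 \<le> \<bar>s\<bar>"
  shows "phi b s \<le> \<bar>s\<bar> powr (-2*b)"
proof -
  have "phi b s \<le> (s^2) powr (-b)"
    unfolding phi_def using assms by (intro powr_mono2') auto
  also have "(s^2) powr (-b) = \<bar>s\<bar> powr (-2*b)"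
  proof -
    have "(s^2) powr (-b) = (\<bar>s\<bar> powr 2) powr (-b)" by (simp add: powr_numeral)
    also have "\<dots> = \<bar>s\<bar> powr (2*(-b))" by (rule powr_powr)
    finally show ?thesis by simp
  qed
  finally show ?thesis .
qed

lemma phi_le1: "b \<ge> 0 \<Longrightarrow> phi b s \<le> 1"
  proof -
  assume b: "b \<ge> 0"
  have "1 \<le> (1 + s^2) powr b" by (rule ge_one_powr_ge_zero) (auto simp: b)
  then show ?thesis unfolding phi_def by (simp add: powr_minus_divide divide_le_eq_1)
qed

lemma Phi_fin:
  assumes b: "b > 1/2"
  shows "(\<integral>\<^sup>+s. ennreal (phi b s) \<partial>lborel) < \<infinity>"
proof -
  define e where "e = -2*b"
  have e: "e < -1" using b by (simp add: e_def)
  have I: "(\<integral>\<^sup>+s. ennreal (s powr e) * indicator {1..} s \<partial>lborel) = ennreal (-(1 powr (e+1)) / (e+1))"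
    by (rule nn_integral_has_integral_lebesgue'[OF _ has_integral_powr_to_inf[OF e]]) auto
  have I2: "(\<integral>\<^sup>+s. ennreal ((-s) powr e) * indicator {..-1} s \<partial>lborel) = (\<integral>\<^sup>+s. ennreal (s powr e) * indicator {1..} s \<partial>lborel)"
    using nn_integral_real_affine[of "\<lambda>s. ennreal ((-s) powr e) * indicator {..-1} s" "-1" 0]
    by (simp add: indicator_def)
  have le: "ennreal (phi b s) \<le> indicator {-1..1} s + ennreal (s powr e) * indicator {1..} s + ennreal ((-s) powr e) * indicator {..-1} s" for s
  proof (cases "\<bar>s\<bar> \<le> 1")
    case True then show ?thesis using phi_le1[of b s] b
      by (auto simp: indicator_def intro: order.trans[of _ 1])
  next
    case False
    then have "phi b s \<le> \<bar>s\<bar> powr e" using phi_le_powr[of b s] b by (simp add: e_def)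
    with False show ?thesis by (auto simp: indicator_def abs_if split: if_splits)
  qed
  have "(\<integral>\<^sup>+s. ennreal (phi b s) \<partial>lborel) \<le> (\<integral>\<^sup>+s. indicator {-1..1} s + ennreal (s powr e) * indicator {1..} s + ennreal ((-s) powr e) * indicator {..-1} s \<partial>lborel)"
    by (rule nn_integral_mono) (rule le)
  also have "\<dots> = emeasure lborel {-1..1::real} + (\<integral>\<^sup>+s. ennreal (s powr e) * indicator {1..} s \<partial>lborel) + (\<integral>\<^sup>+s. ennreal ((-s) powr e) * indicator {..-1} s \<partial>lborel)"
    by (subst nn_integral_add, simp, simp)+ simp
  also have "\<dots> < \<infinity>" unfolding I2 I by (simp add: less_top[symmetric])
  finally show ?thesis .
qed



lemma sub_half:
  fixes h :: "real \<Rightarrow> real"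
  assumes cont: "continuous_on UNIV h" and nn: "\<And>u. 0 \<le> h u"
  shows "(\<integral>\<^sup>+s. ennreal (2 * s * h (s^2) * indicator {0..} s) \<partial>lborel) \<le> (\<integral>\<^sup>+u. ennreal (h u) \<partial>lborel)"
proof -
  have hm[measurable]: "h \<in> borel_measurable borel"
    using cont by (rule borel_measurable_continuous_onI)
  let ?f = "\<lambda>(i::nat) (s::real). ennreal (2 * s * h (s^2) * indicator {0..real i} s)"
  let ?fR = "\<lambda>s. ennreal (2 * s * h (s^2) * indicator {0..} s)"
  have "(SUP i. ?f i x) = ?fR x" for x
  proof (rule LIMSEQ_unique[OF LIMSEQ_SUP])
    obtain n where "x < real n"
      using reals_Archimedean2[of "x"] ..
    then have "eventually (\<lambda>n. ?f n x = ?fR x) sequentially"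
      by (auto simp: frequently_def intro!: eventually_sequentiallyI[where c=n] split: split_indicator)
    then show "(\<lambda>n. ?f n x) \<longlonglongrightarrow> ?fR x"
      by (rule tendsto_eventually)
  qed (auto simp: nn incseq_def le_fun_def split: split_indicator intro!: ennreal_leI mult_nonneg_nonneg)
  then have "integral\<^sup>N lborel ?fR = (\<integral>\<^sup>+ x. (SUP i. ?f i x) \<partial>lborel)"
    by simp
  also have "\<dots> = (SUP i. (\<integral>\<^sup>+ x. ?f i x \<partial>lborel))"
  proof (rule nn_integral_monotone_convergence_SUP)
    show "incseq ?f"
      using nn by (auto simp: incseq_def le_fun_def split: split_indicator intro!: ennreal_leI mult_nonneg_nonneg)
    show "\<And>i. (?f i) \<in> borel_measurable lborel"
      by auto
  qed
  also have "\<dots> \<le> (\<integral>\<^sup>+u. ennreal (h u) \<partial>lborel)"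
  proof (rule SUP_least)
    fix i :: nat
    have "(\<integral>\<^sup>+ x. ?f i x \<partial>lborel) = (\<integral>\<^sup>+ x. ennreal (h (x^2) * (2*x) * indicator {0..real i} x) \<partial>lborel)"
      by (simp add: mult_ac)
    also have "\<dots> = (\<integral>\<^sup>+ x. ennreal (h x * indicator {0^2..(real i)^2} x) \<partial>lborel)"
      by (rule nn_integral_substitution[symmetric, where g="\<lambda>x. x^2" and g'="\<lambda>x. 2*x"])
        (auto intro!: derivative_eq_intros continuous_intros simp: set_borel_measurable_def)
    also have "\<dots> \<le> (\<integral>\<^sup>+u. ennreal (h u) \<partial>lborel)"
      by (intro nn_integral_mono ennreal_leI) (auto simp: nn indicator_def)
    finally show "(\<integral>\<^sup>+ x. ?f i x \<partial>lborel) \<le> (\<integral>\<^sup>+u. ennreal (h u) \<partial>lborel)" .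
  qed
  finally show ?thesis .
qed


lemma L_inner:
  fixes \<xi> E b :: real
  shows "(\<integral>\<^sup>+x. ennreal (\<bar>\<xi>\<bar> * \<bar>2*x - \<xi>\<bar> * phi b (E - x^3 - (\<xi>-x)^3)) \<partial>lborel)
          \<le> ennreal (2/3) * (\<integral>\<^sup>+s. ennreal (phi b s) \<partial>lborel)"
proof (cases "\<xi> = 0")
  case True then show ?thesis by simp
next
  case False
  define E' where "E' = E - \<xi>^3/4"
  define h where "h u = \<bar>\<xi>\<bar> * phi b (E' - 3*\<xi>*u)" for u
  have hc: "continuous_on UNIV h" unfolding h_def by (intro continuous_intros)
  have hn: "0 \<le> h u" for u unfolding h_def by (simp add: phi_nonneg)
  have hm[measurable]: "h \<in> borel_measurable borel" using hc by (rule borel_measurable_continuous_onI)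
  have alg: "phi b (E - (\<xi>/2 + 1 * s)^3 - (\<xi> - (\<xi>/2 + 1 * s))^3) = phi b (E' - 3 * \<xi> * s^2)" for s
    unfolding E'_def by (rule arg_cong[where f="phi b"]) (simp add: power3_eq_cube power2_eq_square field_simps)
  define A where "A = (\<integral>\<^sup>+s. ennreal (2 * s * h (s^2) * indicator {0..} s) \<partial>lborel)"
  define H where "H = (\<integral>\<^sup>+u. ennreal (h u) \<partial>lborel)"
  define Phi where "Phi = (\<integral>\<^sup>+s. ennreal (phi b s) \<partial>lborel)"
  have "(\<integral>\<^sup>+x. ennreal (\<bar>\<xi>\<bar> * \<bar>2*x - \<xi>\<bar> * phi b (E - x^3 - (\<xi>-x)^3)) \<partial>lborel)
      = (\<integral>\<^sup>+s. ennreal (\<bar>\<xi>\<bar> * \<bar>2*(\<xi>/2 + 1 * s) - \<xi>\<bar> * phi b (E - (\<xi>/2 + 1 * s)^3 - (\<xi>-(\<xi>/2 + 1 * s))^3)) \<partial>lborel)"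
    by (subst nn_integral_real_affine[where c=1 and t="\<xi>/2"]) auto
  also have "\<dots> = (\<integral>\<^sup>+s. ennreal (2 * \<bar>s\<bar> * h (s^2)) \<partial>lborel)"
    by (intro nn_integral_cong) (simp only: alg, simp add: h_def abs_mult mult_ac)
  also have "\<dots> \<le> (\<integral>\<^sup>+s. ennreal (2 * s * h (s^2) * indicator {0..} s) + ennreal (2 * (-s) * h ((-s)^2) * indicator {0..} (-s)) \<partial>lborel)"
    by (intro nn_integral_mono) (auto simp: indicator_def hn intro!: ennreal_leI)
  also have "\<dots> = A + (\<integral>\<^sup>+s. ennreal (2 * (-s) * h ((-s)^2) * indicator {0..} (-s)) \<partial>lborel)"
    unfolding A_def by (rule nn_integral_add) auto
  also have "(\<integral>\<^sup>+s. ennreal (2 * (-s) * h ((-s)^2) * indicator {0..} (-s)) \<partial>lborel) = A"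
    unfolding A_def by (subst nn_integral_real_affine[where c="-1" and t=0]) auto
  finally have s1: "(\<integral>\<^sup>+x. ennreal (\<bar>\<xi>\<bar> * \<bar>2*x - \<xi>\<bar> * phi b (E - x^3 - (\<xi>-x)^3)) \<partial>lborel) \<le> A + A" .
  have s2: "A \<le> H" unfolding A_def H_def by (rule sub_half[OF hc hn])
  have s3: "H = ennreal (1/3) * Phi"
  proof -
    have "Phi = ennreal \<bar>-3*\<xi>\<bar> * (\<integral>\<^sup>+u. ennreal (phi b (E' + (-3*\<xi>)*u)) \<partial>lborel)"
      unfolding Phi_def using False by (subst nn_integral_real_affine[where c="-3*\<xi>" and t=E']) auto
    then have "ennreal (1/3) * Phi = ennreal (1/3) * ennreal (3*\<bar>\<xi>\<bar>) * (\<integral>\<^sup>+u. ennreal (phi b (E' + (-3*\<xi>)*u)) \<partial>lborel)"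
      by (simp add: abs_mult mult.assoc)
    also have "ennreal (1/3) * ennreal (3*\<bar>\<xi>\<bar>) = ennreal \<bar>\<xi>\<bar>"
      by (simp add: ennreal_mult[symmetric])
    also have "ennreal \<bar>\<xi>\<bar> * (\<integral>\<^sup>+u. ennreal (phi b (E' + (-3*\<xi>)*u)) \<partial>lborel) = H"
      unfolding H_def
      by (subst nn_integral_cmult[symmetric]) (auto simp: h_def ennreal_mult[symmetric] phi_nonneg intro!: nn_integral_cong)
    finally show ?thesis ..
  qed
  have "A + A \<le> H + H" by (intro add_mono s2)
  also have "H + H = ennreal (2/3) * Phi"
    unfolding s3 by (simp add: distrib_right[symmetric] ennreal_plus[symmetric] del: ennreal_plus)
  finally show ?thesis using s1 unfolding Phi_def by (rule order.trans[rotated])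
qed

lemma L_key:
  fixes \<tau> \<xi> \<eta> \<eta>1 b :: real
  shows "(\<integral>\<^sup>+\<xi>1. \<integral>\<^sup>+\<tau>1. ennreal (\<bar>\<xi>\<bar> * \<bar>2*\<xi>1 - \<xi>\<bar> * phi b (\<tau>1 - \<xi>1^3 - \<eta>1^3) * phi b ((\<tau> - \<tau>1) - (\<xi>-\<xi>1)^3 - (\<eta>-\<eta>1)^3)) \<partial>lborel \<partial>lborel)
          \<le> ennreal (2/3) * (\<integral>\<^sup>+s. ennreal (phi b s) \<partial>lborel)^2"
proof -
  define P where "P = \<tau> - \<eta>1^3 - (\<eta>-\<eta>1)^3"
  define Phi where "Phi = (\<integral>\<^sup>+s. ennreal (phi b s) \<partial>lborel)"
  have "(\<integral>\<^sup>+\<xi>1. \<integral>\<^sup>+\<tau>1. ennreal (\<bar>\<xi>\<bar> * \<bar>2*\<xi>1 - \<xi>\<bar> * phi b (\<tau>1 - \<xi>1^3 - \<eta>1^3) * phi b ((\<tau> - \<tau>1) - (\<xi>-\<xi>1)^3 - (\<eta>-\<eta>1)^3)) \<partial>lborel \<partial>lborel)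
    = (\<integral>\<^sup>+\<xi>1. \<integral>\<^sup>+t. ennreal (phi b t * (\<bar>\<xi>\<bar> * \<bar>2*\<xi>1 - \<xi>\<bar> * phi b ((P - t) - \<xi>1^3 - (\<xi>-\<xi>1)^3))) \<partial>lborel \<partial>lborel)"
  proof (rule nn_integral_cong)
    fix \<xi>1 :: real
    show "(\<integral>\<^sup>+\<tau>1. ennreal (\<bar>\<xi>\<bar> * \<bar>2*\<xi>1 - \<xi>\<bar> * phi b (\<tau>1 - \<xi>1^3 - \<eta>1^3) * phi b ((\<tau> - \<tau>1) - (\<xi>-\<xi>1)^3 - (\<eta>-\<eta>1)^3)) \<partial>lborel)
      = (\<integral>\<^sup>+t. ennreal (phi b t * (\<bar>\<xi>\<bar> * \<bar>2*\<xi>1 - \<xi>\<bar> * phi b ((P - t) - \<xi>1^3 - (\<xi>-\<xi>1)^3))) \<partial>lborel)"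
      by (subst nn_integral_real_affine[where c=1 and t="\<xi>1^3 + \<eta>1^3"])
        (auto simp: P_def algebra_simps intro!: nn_integral_cong)
  qed
  also have "\<dots> = (\<integral>\<^sup>+t. \<integral>\<^sup>+\<xi>1. ennreal (phi b t * (\<bar>\<xi>\<bar> * \<bar>2*\<xi>1 - \<xi>\<bar> * phi b ((P - t) - \<xi>1^3 - (\<xi>-\<xi>1)^3))) \<partial>lborel \<partial>lborel)"
    by (rule nn_swap) measurable
  also have "\<dots> = (\<integral>\<^sup>+t. ennreal (phi b t) * (\<integral>\<^sup>+\<xi>1. ennreal (\<bar>\<xi>\<bar> * \<bar>2*\<xi>1 - \<xi>\<bar> * phi b ((P - t) - \<xi>1^3 - (\<xi>-\<xi>1)^3)) \<partial>lborel) \<partial>lborel)"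
    by (intro nn_integral_cong, subst nn_integral_cmult[symmetric])
       (auto simp: ennreal_mult phi_nonneg)
  also have "\<dots> \<le> (\<integral>\<^sup>+t. ennreal (phi b t) * (ennreal (2/3) * Phi) \<partial>lborel)"
    unfolding Phi_def by (intro nn_integral_mono mult_left_mono L_inner) auto
  also have "\<dots> = ennreal (2/3) * Phi^2"
    by (subst nn_integral_multc) (auto simp: Phi_def power2_eq_square mult_ac)
  finally show ?thesis unfolding Phi_def .
qed


lemma kdv_meas[measurable]: "kdv_sym \<in> borel_measurable borel"
  unfolding kdv_sym_def by measurable

lemma jap_meas[measurable]: "japanese \<in> borel_measurable borel"
  unfolding japanese_def by measurable

lemma japanese_pos: "japanese s > 0"
  unfolding japanese_def by (simp add: add_pos_nonneg)

lemma sqrt_phi_jap: "sqrt (phi b s) * japanese s powr b = 1"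
proof -
  have p: "0 < 1 + s^2" by (simp add: add_pos_nonneg)
  have "sqrt (phi b s) = ((1 + s^2) powr (-b)) powr (1/2)"
    unfolding phi_def by (simp add: powr_half_sqrt)
  also have "\<dots> = (1 + s^2) powr (-b/2)" by (simp add: powr_powr)
  finally have 1: "sqrt (phi b s) = (1 + s^2) powr (-b/2)" .
  have "japanese s powr b = ((1 + s^2) powr (1/2)) powr b"
    unfolding japanese_def using p by (simp add: powr_half_sqrt)
  also have "\<dots> = (1 + s^2) powr (b/2)" by (simp add: powr_powr)
  finally have 2: "japanese s powr b = (1 + s^2) powr (b/2)" .
  show ?thesis unfolding 1 2 using p by (simp add: powr_add[symmetric])
qed

definition Fp :: "real \<Rightarrow> (real \<times> real \<times> real \<Rightarrow> complex) \<Rightarrow> real \<times> real \<times> real \<Rightarrow> real" where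
  "Fp b f w = japanese (kdv_sym w) powr b * cmod (f w)"

definition Kk :: "real \<Rightarrow> real \<times> real \<times> real \<Rightarrow> real \<times> real \<times> real \<Rightarrow> real" where
  "Kk b w w1 = sqrt \<bar>fst (snd w)\<bar> * sqrt \<bar>2 * fst (snd w1) - fst (snd w)\<bar> *
      sqrt (phi b (kdv_sym w1)) * sqrt (phi b (kdv_sym (w - w1)))"

lemma Fp_nonneg: "0 \<le> Fp b f w" unfolding Fp_def by simp
lemma Kk_nonneg: "0 \<le> Kk b w w1" unfolding Kk_def by (simp add: phi_nonneg)

lemma Fp_meas[measurable]: "f \<in> borel_measurable borel \<Longrightarrow> Fp b f \<in> borel_measurable borel"
  unfolding Fp_def by measurable

lemma Kk_sq: "(Kk b w w1)^2 = \<bar>fst (snd w)\<bar> * \<bar>2 * fst (snd w1) - fst (snd w)\<bar> *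
      phi b (kdv_sym w1) * phi b (kdv_sym (w - w1))"
  unfolding Kk_def by (simp add: power_mult_distrib phi_nonneg)

lemma cmod_Fp: "cmod (f w) = sqrt (phi b (kdv_sym w)) * Fp b f w"
  unfolding Fp_def using sqrt_phi_jap[of b "kdv_sym w"] by (simp add: mult.assoc[symmetric])

lemma norm_bil_integrand:
  "cmod (bil_integrand f g w w1) = Kk b w w1 * Fp b f w1 * Fp b g (w - w1)"
proof -
  have e: "fst (snd w1) - (fst (snd w) - fst (snd w1)) = 2 * fst (snd w1) - fst (snd w)" by simp
  show ?thesis
    unfolding bil_integrand_def norm_mult Kk_def e
    by (simp add: cmod_Fp[of f w1 b] cmod_Fp[of g "w - w1" b] abs_mult mult_ac norm_mult)
qed

lemma Xsb_Fp: "Xsb_norm_sq b f = (\<integral>\<^sup>+w. ennreal ((Fp b f w)^2) \<partial>lborel)"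
  unfolding Xsb_norm_sq_def Fp_def by (simp add: power_mult_distrib)

lemma CS_ae:
  fixes x u v :: "'a \<Rightarrow> real"
  assumes [measurable]: "u \<in> borel_measurable M" "v \<in> borel_measurable M"
    and nn: "\<And>y. 0 \<le> u y" "\<And>y. 0 \<le> v y"
    and ae: "AE y in M. x y = u y * v y"
  shows "(\<integral>\<^sup>+y. ennreal (x y) \<partial>M)^2 \<le> (\<integral>\<^sup>+y. ennreal ((u y)^2) \<partial>M) * (\<integral>\<^sup>+y. ennreal ((v y)^2) \<partial>M)"
proof -
  have "(\<integral>\<^sup>+y. ennreal (x y) \<partial>M) = (\<integral>\<^sup>+y. ennreal (u y) * ennreal (v y) \<partial>M)"
    by (rule nn_integral_cong_AE) (use ae nn in \<open>auto simp: ennreal_mult\<close>)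
  also have "(\<dots>)^2 \<le> (\<integral>\<^sup>+y. ennreal (u y) ^ 2 \<partial>M) * (\<integral>\<^sup>+y. ennreal (v y) ^ 2 \<partial>M)"
    by (rule Cauchy_Schwarz_nn_integral) auto
  finally show ?thesis using nn by (simp add: ennreal_power)
qed


lemma Kk_meas[measurable]: "(\<lambda>w1. Kk b w w1) \<in> borel_measurable borel"
  unfolding Kk_def by measurable

lemma FF:
  fixes c :: "real \<Rightarrow> real"
  assumes [measurable]: "c \<in> borel_measurable borel" and cn: "\<And>e. 0 \<le> c e"
  shows "(\<integral>\<^sup>+w1. ennreal (c (snd (snd w1)) * (Kk b w w1)^2) \<partial>lborel)
     \<le> ennreal (2/3) * (\<integral>\<^sup>+s. ennreal (phi b s) \<partial>lborel)^2 * (\<integral>\<^sup>+e. ennreal (c e) \<partial>lborel)"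
proof -
  obtain \<tau> \<xi> \<eta> where w: "w = (\<tau>, \<xi>, \<eta>)" by (cases w) auto
  define M where "M = ennreal (2/3) * (\<integral>\<^sup>+s. ennreal (phi b s) \<partial>lborel)^2"
  have "(\<integral>\<^sup>+w1. ennreal (c (snd (snd w1)) * (Kk b w w1)^2) \<partial>lborel)
      = (\<integral>\<^sup>+e. \<integral>\<^sup>+x. \<integral>\<^sup>+t. ennreal (c e * (Kk b w (t,x,e))^2) \<partial>lborel \<partial>lborel \<partial>lborel)"
    by (subst nn_triple) auto
  also have "\<dots> = (\<integral>\<^sup>+e. ennreal (c e) * (\<integral>\<^sup>+x. \<integral>\<^sup>+t. ennreal (\<bar>\<xi>\<bar> * \<bar>2*x - \<xi>\<bar> * phi b (t - x^3 - e^3) * phi b ((\<tau> - t) - (\<xi>-x)^3 - (\<eta>-e)^3)) \<partial>lborel \<partial>lborel) \<partial>lborel)"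
  proof (rule nn_integral_cong)
    fix e :: real
    have "(\<integral>\<^sup>+x. \<integral>\<^sup>+t. ennreal (c e * (Kk b w (t,x,e))^2) \<partial>lborel \<partial>lborel)
       = (\<integral>\<^sup>+x. ennreal (c e) * (\<integral>\<^sup>+t. ennreal (\<bar>\<xi>\<bar> * \<bar>2*x - \<xi>\<bar> * phi b (t - x^3 - e^3) * phi b ((\<tau> - t) - (\<xi>-x)^3 - (\<eta>-e)^3)) \<partial>lborel) \<partial>lborel)"
      by (intro nn_integral_cong, subst nn_integral_cmult[symmetric])
         (auto simp: Kk_sq w kdv_sym_def ennreal_mult cn phi_nonneg intro!: nn_integral_cong)
    also have "\<dots> = ennreal (c e) * (\<integral>\<^sup>+x. \<integral>\<^sup>+t. ennreal (\<bar>\<xi>\<bar> * \<bar>2*x - \<xi>\<bar> * phi b (t - x^3 - e^3) * phi b ((\<tau> - t) - (\<xi>-x)^3 - (\<eta>-e)^3)) \<partial>lborel \<partial>lborel)"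
    proof (rule nn_integral_cmult)
      have "(\<lambda>(x,t). ennreal (\<bar>\<xi>\<bar> * \<bar>2*x - \<xi>\<bar> * phi b (t - x^3 - e^3) * phi b ((\<tau> - t) - (\<xi>-x)^3 - (\<eta>-e)^3))) \<in> borel_measurable (lborel \<Otimes>\<^sub>M lborel)"
        by (simp add: lborel_prod case_prod_beta')
      then show "(\<lambda>x. \<integral>\<^sup>+t. ennreal (\<bar>\<xi>\<bar> * \<bar>2*x - \<xi>\<bar> * phi b (t - x^3 - e^3) * phi b ((\<tau> - t) - (\<xi>-x)^3 - (\<eta>-e)^3)) \<partial>lborel) \<in> borel_measurable lborel"
        by (rule lborel.borel_measurable_nn_integral[of "\<lambda>x t. ennreal (\<bar>\<xi>\<bar> * \<bar>2*x - \<xi>\<bar> * phi b (t - x^3 - e^3) * phi b ((\<tau> - t) - (\<xi>-x)^3 - (\<eta>-e)^3))", simplified])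
    qed
    finally show "(\<integral>\<^sup>+x. \<integral>\<^sup>+t. ennreal (c e * (Kk b w (t,x,e))^2) \<partial>lborel \<partial>lborel)
       = ennreal (c e) * (\<integral>\<^sup>+x. \<integral>\<^sup>+t. ennreal (\<bar>\<xi>\<bar> * \<bar>2*x - \<xi>\<bar> * phi b (t - x^3 - e^3) * phi b ((\<tau> - t) - (\<xi>-x)^3 - (\<eta>-e)^3)) \<partial>lborel \<partial>lborel)" .
  qed
  also have "\<dots> \<le> (\<integral>\<^sup>+e. ennreal (c e) * M \<partial>lborel)"
    unfolding M_def by (intro nn_integral_mono mult_left_mono L_key) auto
  also have "\<dots> = M * (\<integral>\<^sup>+e. ennreal (c e) \<partial>lborel)"
    by (subst nn_integral_multc) (auto simp: mult.commute)
  finally show ?thesis unfolding M_def .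
qed


lemma PB:
  fixes ch :: "real \<Rightarrow> real" and rh :: "real \<Rightarrow> real"
  assumes [measurable]: "f \<in> borel_measurable borel" "g \<in> borel_measurable borel"
    "ch \<in> borel_measurable borel" "rh \<in> borel_measurable borel"
    and chn: "\<And>e. 0 \<le> ch e" and rhn: "\<And>e. 0 \<le> rh e"
    and ae: "AE w1 in lborel. ch (snd (snd w1)) * Fp b f w1 * Fp b g (w - w1) \<noteq> 0 \<longrightarrow> rh (snd (snd w1)) > 0"
  shows "(\<integral>\<^sup>+w1. ennreal (ch (snd (snd w1)) * Kk b w w1 * Fp b f w1 * Fp b g (w - w1)) \<partial>lborel)^2
    \<le> ennreal (2/3) * (\<integral>\<^sup>+s. ennreal (phi b s) \<partial>lborel)^2 * (\<integral>\<^sup>+e. ennreal ((ch e)^2 * rh e) \<partial>lborel)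
       * (\<integral>\<^sup>+w1. ennreal ((Fp b f w1)^2 * (Fp b g (w - w1))^2 / rh (snd (snd w1))) \<partial>lborel)"
proof -
  let ?u = "\<lambda>w1. ch (snd (snd w1)) * Kk b w w1 * sqrt (rh (snd (snd w1)))"
  let ?v = "\<lambda>w1. Fp b f w1 * Fp b g (w - w1) / sqrt (rh (snd (snd w1)))"
  have "(\<integral>\<^sup>+w1. ennreal (ch (snd (snd w1)) * Kk b w w1 * Fp b f w1 * Fp b g (w - w1)) \<partial>lborel)^2
     \<le> (\<integral>\<^sup>+w1. ennreal ((?u w1)^2) \<partial>lborel) * (\<integral>\<^sup>+w1. ennreal ((?v w1)^2) \<partial>lborel)"
  proof (rule CS_ae)
    show "AE w1 in lborel. ch (snd (snd w1)) * Kk b w w1 * Fp b f w1 * Fp b g (w - w1) = ?u w1 * ?v w1"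
      using ae by eventually_elim (auto simp: rhn)
  qed (auto simp: chn rhn Kk_nonneg Fp_nonneg)
  also have "(\<integral>\<^sup>+w1. ennreal ((?u w1)^2) \<partial>lborel) = (\<integral>\<^sup>+w1. ennreal (((ch (snd (snd w1)))^2 * rh (snd (snd w1))) * (Kk b w w1)^2) \<partial>lborel)"
    by (intro nn_integral_cong) (simp add: power_mult_distrib rhn mult_ac)
  also have "\<dots> \<le> ennreal (2/3) * (\<integral>\<^sup>+s. ennreal (phi b s) \<partial>lborel)^2 * (\<integral>\<^sup>+e. ennreal ((ch e)^2 * rh e) \<partial>lborel)"
    by (rule FF) (auto simp: rhn)
  also have "(\<integral>\<^sup>+w1. ennreal ((?v w1)^2) \<partial>lborel) = (\<integral>\<^sup>+w1. ennreal ((Fp b f w1)^2 * (Fp b g (w - w1))^2 / rh (snd (snd w1))) \<partial>lborel)"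
    by (intro nn_integral_cong) (simp add: power_mult_distrib power_divide rhn)
  finally show ?thesis by (simp add: mult_right_mono)
qed


lemma meas_nn_borel[measurable (raw)]:
  fixes f :: "'a::euclidean_space \<Rightarrow> 'b::euclidean_space \<Rightarrow> ennreal"
  assumes "(\<lambda>(x,y). f x y) \<in> borel_measurable borel"
  shows "(\<lambda>x. \<integral>\<^sup>+y. f x y \<partial>lborel) \<in> borel_measurable borel"
proof -
  have "(\<lambda>(x,y). f x y) \<in> borel_measurable (lborel \<Otimes>\<^sub>M lborel)"
    using assms by (simp add: lborel_prod)
  then have "(\<lambda>x. \<integral>\<^sup>+y. f x y \<partial>lborel) \<in> borel_measurable lborel"
    by (rule lborel.borel_measurable_nn_integral)
  then show ?thesis by simp
qed

lemma translate3:
  fixes h :: "real \<times> real \<times> real \<Rightarrow> ennreal"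
  assumes [measurable]: "h \<in> borel_measurable borel"
  shows "(\<integral>\<^sup>+w. h (w - c) \<partial>lborel) = (\<integral>\<^sup>+w. h w \<partial>lborel)"
  using nn_translate[of "\<lambda>w. h (w - c)" c] by simp

lemma SF1:
  assumes [measurable]: "f \<in> borel_measurable borel" "g \<in> borel_measurable borel"
  shows "(\<integral>\<^sup>+w. \<integral>\<^sup>+w1. ennreal ((Fp b f w1)^2 * (Fp b g (w - w1))^2 / 1) \<partial>lborel \<partial>lborel)
     = (\<integral>\<^sup>+w. ennreal ((Fp b f w)^2) \<partial>lborel) * (\<integral>\<^sup>+w. ennreal ((Fp b g w)^2) \<partial>lborel)"
proof -
  have "(\<integral>\<^sup>+w. \<integral>\<^sup>+w1. ennreal ((Fp b f w1)^2 * (Fp b g (w - w1))^2 / 1) \<partial>lborel \<partial>lborel)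
     = (\<integral>\<^sup>+w1. \<integral>\<^sup>+w. ennreal ((Fp b f w1)^2) * ennreal ((Fp b g (w - w1))^2) \<partial>lborel \<partial>lborel)"
    by (subst nn_swap) (auto simp: ennreal_mult)
  also have "\<dots> = (\<integral>\<^sup>+w1. ennreal ((Fp b f w1)^2) * (\<integral>\<^sup>+w. ennreal ((Fp b g w)^2) \<partial>lborel) \<partial>lborel)"
  proof (intro nn_integral_cong)
    fix x :: "real \<times> real \<times> real"
    have T: "(\<integral>\<^sup>+w. ennreal ((Fp b g (w - x))^2) \<partial>lborel) = (\<integral>\<^sup>+w. ennreal ((Fp b g w)^2) \<partial>lborel)"
      by (rule translate3[where h="\<lambda>v. ennreal ((Fp b g v)^2)", simplified]) measurable
    show "(\<integral>\<^sup>+w. ennreal ((Fp b f x)^2) * ennreal ((Fp b g (w - x))^2) \<partial>lborel) = ennreal ((Fp b f x)^2) * (\<integral>\<^sup>+w. ennreal ((Fp b g w)^2) \<partial>lborel)"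
      by (subst nn_integral_cmult) (auto simp: T)
  qed
  also have "\<dots> = (\<integral>\<^sup>+w. ennreal ((Fp b f w)^2) \<partial>lborel) * (\<integral>\<^sup>+w. ennreal ((Fp b g w)^2) \<partial>lborel)"
    by (rule nn_integral_multc) simp
  finally show ?thesis .
qed

definition a2 :: "real \<Rightarrow> (real \<times> real \<times> real \<Rightarrow> complex) \<Rightarrow> real \<Rightarrow> ennreal" where
  "a2 b f e = (\<integral>\<^sup>+x. \<integral>\<^sup>+t. ennreal ((Fp b f (t,x,e))^2) \<partial>lborel \<partial>lborel)"

lemma a2_meas[measurable]: assumes [measurable]: "f \<in> borel_measurable borel"
  shows "a2 b f \<in> borel_measurable borel"
proof -
  have "(\<lambda>(p,t). ennreal ((Fp b f (t, snd p, fst p))^2)) \<in> borel_measurable borel"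
    by (simp add: case_prod_beta') measurable
  then have "(\<lambda>p. \<integral>\<^sup>+t. ennreal ((Fp b f (t, snd p, fst p))^2) \<partial>lborel) \<in> borel_measurable borel"
    by (rule meas_nn_borel[of "\<lambda>p t. ennreal ((Fp b f (t, snd p, fst p))^2)"])
  then have "(\<lambda>(e,x). \<integral>\<^sup>+t. ennreal ((Fp b f (t, x, e))^2) \<partial>lborel) \<in> borel_measurable borel"
    by (simp add: case_prod_beta')
  then show ?thesis unfolding a2_def
    by (rule meas_nn_borel[of "\<lambda>e x. \<integral>\<^sup>+t. ennreal ((Fp b f (t, x, e))^2) \<partial>lborel"])
qed

lemma a2_int: assumes [measurable]: "f \<in> borel_measurable borel"
  shows "(\<integral>\<^sup>+e. a2 b f e \<partial>lborel) = (\<integral>\<^sup>+w. ennreal ((Fp b f w)^2) \<partial>lborel)"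
proof -
  have m: "(\<lambda>w. ennreal ((Fp b f w)^2)) \<in> borel_measurable borel" by measurable
  show ?thesis using nn_triple[OF m] by (simp add: a2_def)
qed


lemma ind_shift_int:
  fixes R c :: real assumes "0 \<le> R"
  shows "(\<integral>\<^sup>+e. indicator {-R..R} (e + c) \<partial>lborel) = ennreal (2*R)"
proof -
  have "(\<lambda>e. indicator {-R..R} (e + c) :: ennreal) = indicator {-R-c..R-c}"
    by (auto simp: indicator_def fun_eq_iff)
  then show ?thesis using assms by simp
qed

lemma a2_ratio: "ennreal (1 / enn2real (a2 b f e)) * a2 b f e \<le> 1"
proof (cases "a2 b f e")
  case (real r)
  then show ?thesis
  proof (cases "r = 0")
    case False
    with real show ?thesis by (simp add: ennreal_mult[symmetric])
  qed simp
qed simp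

lemma SF3:
  fixes R :: real
  assumes [measurable]: "f \<in> borel_measurable borel" "g \<in> borel_measurable borel" and R: "0 \<le> R"
  shows "(\<integral>\<^sup>+w. indicator {-R..R} (snd (snd w)) * (\<integral>\<^sup>+w1. ennreal ((Fp b f w1)^2 * (Fp b g (w - w1))^2 / enn2real (a2 b f (snd (snd w1)))) \<partial>lborel) \<partial>lborel)
     \<le> ennreal (2*R) * (\<integral>\<^sup>+w. ennreal ((Fp b g w)^2) \<partial>lborel)"
proof -
  define ar where "ar e = enn2real (a2 b f e)" for e
  have ar_meas[measurable]: "ar \<in> borel_measurable borel" unfolding ar_def by measurable
  have arn: "0 \<le> ar e" for e unfolding ar_def by simp
  define X where "X w1 = ennreal ((Fp b f w1)^2 / ar (snd (snd w1)))" for w1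
  define Y where "Y v = ennreal ((Fp b g v)^2)" for v
  have X_meas[measurable]: "X \<in> borel_measurable borel" unfolding X_def by measurable
  have Y_meas[measurable]: "Y \<in> borel_measurable borel" unfolding Y_def by measurable
  define Q where "Q e = (\<integral>\<^sup>+v. indicator {-R..R} (e + snd (snd v)) * Y v \<partial>lborel)" for e
  have Q_meas[measurable]: "Q \<in> borel_measurable borel"
  proof -
    have "(\<lambda>(e,v). indicator {-R..R} (e + snd (snd v)) * Y v :: ennreal) \<in> borel_measurable borel"
      by measurable
    then show ?thesis unfolding Q_def by (rule meas_nn_borel[of "\<lambda>e v. indicator {-R..R} (e + snd (snd v)) * Y v"])
  qed
  have "(\<integral>\<^sup>+w. indicator {-R..R} (snd (snd w)) * (\<integral>\<^sup>+w1. ennreal ((Fp b f w1)^2 * (Fp b g (w - w1))^2 / enn2real (a2 b f (snd (snd w1)))) \<partial>lborel) \<partial>lborel)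
     = (\<integral>\<^sup>+w. \<integral>\<^sup>+w1. indicator {-R..R} (snd (snd w)) * (X w1 * Y (w - w1)) \<partial>lborel \<partial>lborel)"
    by (intro nn_integral_cong, subst nn_integral_cmult[symmetric])
       (auto simp: X_def Y_def ar_def ennreal_mult[symmetric] intro!: nn_integral_cong arg_cong[where f=ennreal])
  also have "\<dots> = (\<integral>\<^sup>+w1. \<integral>\<^sup>+w. indicator {-R..R} (snd (snd w)) * (X w1 * Y (w - w1)) \<partial>lborel \<partial>lborel)"
    by (rule nn_swap) measurable
  also have "\<dots> = (\<integral>\<^sup>+w1. X w1 * Q (snd (snd w1)) \<partial>lborel)"
  proof (rule nn_integral_cong)
    fix w1 :: "real \<times> real \<times> real"
    have "(\<integral>\<^sup>+w. indicator {-R..R} (snd (snd w)) * (X w1 * Y (w - w1)) \<partial>lborel)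
        = X w1 * (\<integral>\<^sup>+w. indicator {-R..R} (snd (snd w)) * Y (w - w1) \<partial>lborel)"
      by (subst nn_integral_cmult[symmetric]) (auto simp: mult_ac)
    also have "(\<integral>\<^sup>+w. indicator {-R..R} (snd (snd w)) * Y (w - w1) \<partial>lborel)
        = (\<integral>\<^sup>+x. indicator {-R..R} (snd (snd (w1 + x))) * Y (w1 + x - w1) \<partial>lborel)"
      by (rule nn_translate[where h="\<lambda>w. indicator {-R..R} (snd (snd w)) * Y (w - w1)", symmetric]) measurable
    also have "\<dots> = Q (snd (snd w1))" unfolding Q_def by simp
    finally show "(\<integral>\<^sup>+w. indicator {-R..R} (snd (snd w)) * (X w1 * Y (w - w1)) \<partial>lborel) = X w1 * Q (snd (snd w1))" .
  qed
  also have "\<dots> = (\<integral>\<^sup>+e. \<integral>\<^sup>+x. \<integral>\<^sup>+t. X (t,x,e) * Q e \<partial>lborel \<partial>lborel \<partial>lborel)"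
    by (subst nn_triple) auto
  also have "\<dots> = (\<integral>\<^sup>+e. Q e * (ennreal (1 / ar e) * a2 b f e) \<partial>lborel)"
  proof (rule nn_integral_cong)
    fix e :: real
    have "(\<integral>\<^sup>+x. \<integral>\<^sup>+t. X (t,x,e) * Q e \<partial>lborel \<partial>lborel) = (\<integral>\<^sup>+x. (Q e * ennreal (1 / ar e)) * (\<integral>\<^sup>+t. ennreal ((Fp b f (t,x,e))^2) \<partial>lborel) \<partial>lborel)"
      by (intro nn_integral_cong, subst nn_integral_cmult[symmetric])
         (auto simp: X_def ennreal_mult[symmetric] arn mult_ac intro!: nn_integral_cong)
    also have "\<dots> = (Q e * ennreal (1 / ar e)) * a2 b f e"
      unfolding a2_def
    proof (rule nn_integral_cmult)
      have "(\<lambda>(x,t). ennreal ((Fp b f (t,x,e))^2)) \<in> borel_measurable borel"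
        by (simp add: case_prod_beta') measurable
      then show "(\<lambda>x. \<integral>\<^sup>+t. ennreal ((Fp b f (t,x,e))^2) \<partial>lborel) \<in> borel_measurable lborel"
        using meas_nn_borel[of "\<lambda>x t. ennreal ((Fp b f (t,x,e))^2)"] by simp
    qed
    finally show "(\<integral>\<^sup>+x. \<integral>\<^sup>+t. X (t,x,e) * Q e \<partial>lborel \<partial>lborel) = Q e * (ennreal (1 / ar e) * a2 b f e)"
      by (simp add: mult_ac)
  qed
  also have "\<dots> \<le> (\<integral>\<^sup>+e. Q e \<partial>lborel)"
    by (intro nn_integral_mono) (use a2_ratio[of b f] in \<open>auto simp: ar_def intro: mult_left_le\<close>)
  also have "\<dots> = (\<integral>\<^sup>+v. \<integral>\<^sup>+e. indicator {-R..R} (e + snd (snd v)) * Y v \<partial>lborel \<partial>lborel)"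
    unfolding Q_def by (rule nn_swap) measurable
  also have "\<dots> = (\<integral>\<^sup>+v. ennreal (2*R) * Y v \<partial>lborel)"
    by (intro nn_integral_cong) (simp add: nn_integral_multc ind_shift_int R)
  also have "\<dots> = ennreal (2*R) * (\<integral>\<^sup>+w. ennreal ((Fp b g w)^2) \<partial>lborel)"
    by (subst nn_integral_cmult) (auto simp: Y_def[abs_def])
  finally show ?thesis .
qed


lemma ae_a2:
  assumes [measurable]: "f \<in> borel_measurable borel"
    and fin: "(\<integral>\<^sup>+w. ennreal ((Fp b f w)^2) \<partial>lborel) < \<infinity>"
  shows "AE w1 in lborel. Fp b f w1 \<noteq> 0 \<longrightarrow> enn2real (a2 b f (snd (snd w1))) > 0"
proof -
  define B where "B = {e. a2 b f e = 0 \<or> a2 b f e = \<infinity>}"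
  have B_meas[measurable]: "B \<in> sets borel" unfolding B_def by measurable
  have ae1: "AE e in lborel. a2 b f e \<noteq> \<infinity>"
    by (rule nn_integral_PInf_AE) (use fin a2_int[of f b] in auto)
  have "(\<integral>\<^sup>+w1. ennreal ((Fp b f w1)^2) * indicator B (snd (snd w1)) \<partial>lborel)
      = (\<integral>\<^sup>+e. \<integral>\<^sup>+x. \<integral>\<^sup>+t. indicator B e * ennreal ((Fp b f (t,x,e))^2) \<partial>lborel \<partial>lborel \<partial>lborel)"
    by (subst nn_triple) (auto simp: mult.commute)
  also have "\<dots> = (\<integral>\<^sup>+e. indicator B e * a2 b f e \<partial>lborel)"
  proof (rule nn_integral_cong)
    fix e :: real
    have m: "(\<lambda>x. \<integral>\<^sup>+t. ennreal ((Fp b f (t,x,e))^2) \<partial>lborel) \<in> borel_measurable lborel"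
    proof -
      have "(\<lambda>(x,t). ennreal ((Fp b f (t,x,e))^2)) \<in> borel_measurable borel"
        by (simp add: case_prod_beta') measurable
      then show ?thesis using meas_nn_borel[of "\<lambda>x t. ennreal ((Fp b f (t,x,e))^2)"] by simp
    qed
    show "(\<integral>\<^sup>+x. \<integral>\<^sup>+t. indicator B e * ennreal ((Fp b f (t,x,e))^2) \<partial>lborel \<partial>lborel) = indicator B e * a2 b f e"
      unfolding a2_def
      by (subst nn_integral_cmult, simp, subst nn_integral_cmult[OF m, symmetric], rule refl)
  qed
  also have "\<dots> = (\<integral>\<^sup>+(e::real). 0 \<partial>lborel)"
    using ae1 by (intro nn_integral_cong_AE) (auto elim!: eventually_mono simp: B_def indicator_def)
  finally have "(\<integral>\<^sup>+w1. ennreal ((Fp b f w1)^2) * indicator B (snd (snd w1)) \<partial>lborel) = 0" by simp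
  then have "AE w1 in lborel. ennreal ((Fp b f w1)^2) * indicator B (snd (snd w1)) = 0"
    by (subst (asm) nn_integral_0_iff_AE) auto
  then show ?thesis
  proof eventually_elim
    case (elim w1)
    show ?case
    proof
      assume "Fp b f w1 \<noteq> 0"
      with elim have "snd (snd w1) \<notin> B" by (auto simp: indicator_def split: if_splits)
      then have "a2 b f (snd (snd w1)) \<noteq> 0" "a2 b f (snd (snd w1)) \<noteq> \<infinity>" unfolding B_def by auto
      then show "enn2real (a2 b f (snd (snd w1))) > 0"
        by (cases "a2 b f (snd (snd w1))") auto
    qed
  qed
qed


definition Abs :: "(real \<times> real \<times> real \<Rightarrow> complex) \<Rightarrow> (real \<times> real \<times> real \<Rightarrow> complex) \<Rightarrow> real \<times> real \<times> real \<Rightarrow> ennreal" where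
  "Abs F G w = (\<integral>\<^sup>+w1. ennreal (cmod (bil_integrand F G w w1)) \<partial>lborel)"

lemma bil_int_meas[measurable]:
  assumes [measurable]: "F \<in> borel_measurable borel" "G \<in> borel_measurable borel"
  shows "(\<lambda>(w,w1). bil_integrand F G w w1) \<in> borel_measurable borel"
  unfolding bil_integrand_def by (simp add: case_prod_beta') measurable

lemma Abs_meas[measurable]:
  assumes [measurable]: "F \<in> borel_measurable borel" "G \<in> borel_measurable borel"
  shows "Abs F G \<in> borel_measurable borel"
proof -
  have "(\<lambda>(w,w1). ennreal (cmod (bil_integrand F G w w1))) \<in> borel_measurable borel"
    using bil_int_meas[OF assms] by (simp add: case_prod_beta') measurable
  then show ?thesis unfolding Abs_def[abs_def]
    by (rule meas_nn_borel[of "\<lambda>w w1. ennreal (cmod (bil_integrand F G w w1))"])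
qed

lemma bil_le_Abs: "ennreal ((cmod (bil F G w))^2) \<le> (Abs F G w)^2"
proof -
  have "ennreal (cmod (bil F G w)) \<le> Abs F G w"
  proof (cases "integrable lborel (bil_integrand F G w)")
    case True
    then show ?thesis unfolding bil_def Abs_def by (rule integral_norm_bound_ennreal)
  next
    case False
    then show ?thesis unfolding bil_def by (simp add: not_integrable_integral_eq)
  qed
  then show ?thesis by (simp add: ennreal_power[symmetric] power_mono)
qed

lemma L2_le: "L2_norm_sq (bil F G) \<le> (\<integral>\<^sup>+w. (Abs F G w)^2 \<partial>lborel)"
  unfolding L2_norm_sq_def by (intro nn_integral_mono bil_le_Abs)

lemma L2_Py_le: "L2_norm_sq (Py k (bil F G)) \<le> (\<integral>\<^sup>+w. indicator {-(2 powr k)..2 powr k} (snd (snd w)) * (Abs F G w)^2 \<partial>lborel)"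
  unfolding L2_norm_sq_def Py_def
  by (intro nn_integral_mono) (auto simp: indicator_def bil_le_Abs)

lemma defined_of:
  assumes [measurable]: "F \<in> borel_measurable borel" "G \<in> borel_measurable borel" "S \<in> sets borel"
    and fin: "(\<integral>\<^sup>+w. indicator S w * (Abs F G w)^2 \<partial>lborel) < \<infinity>"
  shows "AE w in lborel. w \<in> S \<longrightarrow> integrable lborel (bil_integrand F G w)"
proof -
  have "AE w in lborel. indicator S w * (Abs F G w)^2 \<noteq> \<infinity>"
    by (rule nn_integral_PInf_AE) (use fin in auto)
  then show ?thesis
  proof eventually_elim
    case (elim w)
    show ?case
    proof
      assume "w \<in> S"
      with elim have "(Abs F G w)^2 \<noteq> \<infinity>" by simp
      then have fin: "Abs F G w < \<infinity>" by (simp add: less_top power_eq_top_ennreal)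
      show "integrable lborel (bil_integrand F G w)"
      proof (rule integrableI_bounded)
        show "bil_integrand F G w \<in> borel_measurable lborel"
          unfolding bil_integrand_def by measurable
        show "(\<integral>\<^sup>+x. ennreal (norm (bil_integrand F G w x)) \<partial>lborel) < \<infinity>" using fin unfolding Abs_def by simp
      qed
    qed
  qed
qed


lemma est12:
  fixes F G f g :: "real \<times> real \<times> real \<Rightarrow> complex" and ch :: "real \<times> real \<times> real \<Rightarrow> real \<Rightarrow> real" and B :: ennreal
  assumes [measurable]: "f \<in> borel_measurable borel" "g \<in> borel_measurable borel"
    and chm[measurable]: "\<And>w. ch w \<in> borel_measurable borel" and chn: "\<And>w e. 0 \<le> ch w e"
    and chi: "\<And>w. (\<integral>\<^sup>+e. ennreal ((ch w e)^2 * 1) \<partial>lborel) \<le> B"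
    and Aeq: "\<And>w. Abs F G w = (\<integral>\<^sup>+w1. ennreal (ch w (snd (snd w1)) * Kk b w w1 * Fp b f w1 * Fp b g (w - w1)) \<partial>lborel)"
  shows "(\<integral>\<^sup>+w. (Abs F G w)^2 \<partial>lborel) \<le> ennreal (2/3) * (\<integral>\<^sup>+s. ennreal (phi b s) \<partial>lborel)^2 * B *
      ((\<integral>\<^sup>+w. ennreal ((Fp b f w)^2) \<partial>lborel) * (\<integral>\<^sup>+w. ennreal ((Fp b g w)^2) \<partial>lborel))"
proof -
  define M where "M = ennreal (2/3) * (\<integral>\<^sup>+s. ennreal (phi b s) \<partial>lborel)^2"
  define S where "S w = (\<integral>\<^sup>+w1. ennreal ((Fp b f w1)^2 * (Fp b g (w - w1))^2 / 1) \<partial>lborel)" for w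
  have Sm: "S \<in> borel_measurable borel"
  proof -
    have "(\<lambda>(w,w1). ennreal ((Fp b f w1)^2 * (Fp b g (w - w1))^2 / 1)) \<in> borel_measurable borel"
      by (simp add: case_prod_beta') measurable
    then show ?thesis unfolding S_def[abs_def]
      by (rule meas_nn_borel[of "\<lambda>w w1. ennreal ((Fp b f w1)^2 * (Fp b g (w - w1))^2 / 1)"])
  qed
  have pw: "(Abs F G w)^2 \<le> M * B * S w" for w
  proof -
    have "(Abs F G w)^2 \<le> M * (\<integral>\<^sup>+e. ennreal ((ch w e)^2 * 1) \<partial>lborel) * S w"
      unfolding Aeq M_def S_def by (rule PB) (auto simp: chn)
    also have "\<dots> \<le> M * B * S w" by (intro mult_right_mono mult_left_mono chi) auto
    finally show ?thesis .
  qed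
  have "(\<integral>\<^sup>+w. (Abs F G w)^2 \<partial>lborel) \<le> (\<integral>\<^sup>+w. M * B * S w \<partial>lborel)"
    by (intro nn_integral_mono pw)
  also have "\<dots> = M * B * (\<integral>\<^sup>+w. S w \<partial>lborel)"
    by (rule nn_integral_cmult) (use Sm in simp)
  also have "(\<integral>\<^sup>+w. S w \<partial>lborel) = (\<integral>\<^sup>+w. ennreal ((Fp b f w)^2) \<partial>lborel) * (\<integral>\<^sup>+w. ennreal ((Fp b g w)^2) \<partial>lborel)"
    unfolding S_def by (rule SF1) auto
  finally show ?thesis unfolding M_def .
qed

lemma est3:
  fixes f g :: "real \<times> real \<times> real \<Rightarrow> complex" and R :: real
  assumes [measurable]: "f \<in> borel_measurable borel" "g \<in> borel_measurable borel" and R: "0 \<le> R"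
    and fin: "(\<integral>\<^sup>+w. ennreal ((Fp b f w)^2) \<partial>lborel) < \<infinity>"
  shows "(\<integral>\<^sup>+w. indicator {-R..R} (snd (snd w)) * (Abs f g w)^2 \<partial>lborel) \<le> ennreal (2/3) * (\<integral>\<^sup>+s. ennreal (phi b s) \<partial>lborel)^2 *
      (\<integral>\<^sup>+w. ennreal ((Fp b f w)^2) \<partial>lborel) * (ennreal (2*R) * (\<integral>\<^sup>+w. ennreal ((Fp b g w)^2) \<partial>lborel))"
proof -
  define M where "M = ennreal (2/3) * (\<integral>\<^sup>+s. ennreal (phi b s) \<partial>lborel)^2"
  define NF where "NF = (\<integral>\<^sup>+w. ennreal ((Fp b f w)^2) \<partial>lborel)"
  define ar where "ar e = enn2real (a2 b f e)" for e
  have ar_meas[measurable]: "ar \<in> borel_measurable borel" unfolding ar_def by measurable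
  define S where "S w = (\<integral>\<^sup>+w1. ennreal ((Fp b f w1)^2 * (Fp b g (w - w1))^2 / ar (snd (snd w1))) \<partial>lborel)" for w
  have Sm[measurable]: "S \<in> borel_measurable borel"
  proof -
    have "(\<lambda>(w,w1). ennreal ((Fp b f w1)^2 * (Fp b g (w - w1))^2 / ar (snd (snd w1)))) \<in> borel_measurable borel"
      by (simp add: case_prod_beta') measurable
    then show ?thesis unfolding S_def[abs_def]
      by (rule meas_nn_borel[of "\<lambda>w w1. ennreal ((Fp b f w1)^2 * (Fp b g (w - w1))^2 / ar (snd (snd w1)))"])
  qed
  have ae: "AE w1 in lborel. Fp b f w1 \<noteq> 0 \<longrightarrow> ar (snd (snd w1)) > 0"
    unfolding ar_def by (rule ae_a2) (use fin in auto)
  have pw: "(Abs f g w)^2 \<le> M * NF * S w" for w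
  proof -
    have "Abs f g w = (\<integral>\<^sup>+w1. ennreal ((\<lambda>e. 1) (snd (snd w1)) * Kk b w w1 * Fp b f w1 * Fp b g (w - w1)) \<partial>lborel)"
      unfolding Abs_def by (simp add: norm_bil_integrand[of f g w _ b])
    then have "(Abs f g w)^2 \<le> M * (\<integral>\<^sup>+e. ennreal (((\<lambda>e. 1) e)^2 * ar e) \<partial>lborel) * S w"
      unfolding M_def S_def
      by (simp only:) (rule PB, auto simp: ar_def intro: eventually_mono[OF ae])
    also have "(\<integral>\<^sup>+e. ennreal (((\<lambda>e. 1) e)^2 * ar e) \<partial>lborel) \<le> NF"
    proof -
      have "(\<integral>\<^sup>+e. ennreal (((\<lambda>e. 1) e)^2 * ar e) \<partial>lborel) \<le> (\<integral>\<^sup>+e. a2 b f e \<partial>lborel)"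
        unfolding ar_def by (intro nn_integral_mono) (simp add: ennreal_enn2real_if)
      then show ?thesis using a2_int[of f b] by (simp add: NF_def)
    qed
    finally show ?thesis by (simp add: mult_right_mono mult_left_mono)
  qed
  have "(\<integral>\<^sup>+w. indicator {-R..R} (snd (snd w)) * (Abs f g w)^2 \<partial>lborel) \<le> (\<integral>\<^sup>+w. (M * NF) * (indicator {-R..R} (snd (snd w)) * S w) \<partial>lborel)"
    by (intro nn_integral_mono) (use pw in \<open>auto simp: indicator_def\<close>)
  also have "\<dots> = (M * NF) * (\<integral>\<^sup>+w. indicator {-R..R} (snd (snd w)) * S w \<partial>lborel)"
    by (rule nn_integral_cmult) measurable
  also have "(\<integral>\<^sup>+w. indicator {-R..R} (snd (snd w)) * S w \<partial>lborel) \<le> ennreal (2*R) * (\<integral>\<^sup>+w. ennreal ((Fp b g w)^2) \<partial>lborel)"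
    unfolding S_def ar_def by (rule SF3) (auto simp: R)
  finally show ?thesis unfolding M_def NF_def by (simp add: mult_left_mono mult.assoc)
qed


lemma bil_Py1: "cmod (bil_integrand (Py k f) g w w1) = indicator {-(2 powr k)..2 powr k} (snd (snd w1)) * cmod (bil_integrand f g w w1)"
  by (auto simp: bil_integrand_def Py_def indicator_def abs_le_iff)

lemma bil_Py2: "cmod (bil_integrand f (Py k g) w w1) = indicator {-(2 powr k)..2 powr k} (snd (snd w) - snd (snd w1)) * cmod (bil_integrand f g w w1)"
  by (auto simp: bil_integrand_def Py_def indicator_def abs_le_iff)

lemma ind_sq_int: "0 \<le> R \<Longrightarrow> (\<integral>\<^sup>+e. ennreal ((indicator {-R..R} (c - e))^2) \<partial>lborel) \<le> ennreal (2*R)"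
proof -
  assume R: "0 \<le> R"
  have "(\<lambda>e. ennreal ((indicator {-R..R} (c - e))^2)) = indicator {c-R..c+R}"
    by (auto simp: indicator_def fun_eq_iff)
  then show ?thesis using R by simp
qed

lemma ind_sq_int0: "0 \<le> R \<Longrightarrow> (\<integral>\<^sup>+e. ennreal ((indicator {-R..R} e)^2) \<partial>lborel) \<le> ennreal (2*R)"
proof -
  assume R: "0 \<le> R"
  have "(\<lambda>e. ennreal ((indicator {-R..R} e)^2)) = indicator {-R..R}"
    by (auto simp: indicator_def fun_eq_iff)
  then show ?thesis using R by simp
qed

lemma final_arith:
  fixes P nf ng C k :: real
  assumes "0 \<le> P" "C = sqrt (4/3 * P^2) + 1"
  shows "ennreal (2/3) * (ennreal P)^2 * ennreal (2 * 2 powr k) * (ennreal (nf^2) * ennreal (ng^2))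
     \<le> ennreal ((C * 2 powr (k/2) * nf * ng)^2)"
proof -
  have "ennreal (2/3) * (ennreal P)^2 * ennreal (2 * 2 powr k) * (ennreal (nf^2) * ennreal (ng^2))
      = ennreal (4/3 * P^2 * 2 powr k * nf^2 * ng^2)"
    using assms(1) by (simp add: ennreal_mult[symmetric] ennreal_power mult_ac)
  also have "\<dots> \<le> ennreal ((C * 2 powr (k/2) * nf * ng)^2)"
  proof (rule ennreal_leI)
    have c0: "0 \<le> sqrt (4/3 * P^2)" by simp
    have c: "4/3 * P^2 \<le> C^2"
    proof -
      have "4/3 * P^2 = (sqrt (4/3 * P^2))^2" by simp
      also have "\<dots> \<le> C^2" using assms(2) c0 by (intro power_mono) auto
      finally show ?thesis .
    qed
    have p: "(2 powr (k/2))^2 = 2 powr k"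
      by (simp add: power2_eq_square powr_add[symmetric])
    have "4/3 * P^2 * 2 powr k * nf^2 * ng^2 \<le> C^2 * 2 powr k * nf^2 * ng^2"
      by (intro mult_right_mono c) auto
    also have "\<dots> = (C * 2 powr (k/2) * nf * ng)^2" by (simp add: power_mult_distrib p)
    finally show "4/3 * P^2 * 2 powr k * nf^2 * ng^2 \<le> (C * 2 powr (k/2) * nf * ng)^2" .
  qed
  finally show ?thesis .
qed

theorem proposition2p4:
  fixes b :: real
  assumes "b > 1/2"
  shows "\<exists>C>0. \<forall>(k::int) f g. in_X0b b f \<and> in_X0b b g \<longrightarrow>
     (bil_defined (Py k f) g \<and>
      L2_norm_sq (bil (Py k f) g) \<le> ennreal ((C * 2 powr (real_of_int k / 2) * Xsb_norm b f * Xsb_norm b g)\<^sup>2)) \<and>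
     (bil_defined f (Py k g) \<and>
      L2_norm_sq (bil f (Py k g)) \<le> ennreal ((C * 2 powr (real_of_int k / 2) * Xsb_norm b f * Xsb_norm b g)\<^sup>2)) \<and>
     (bil_defined f g \<and>
      L2_norm_sq (Py k (bil f g)) \<le> ennreal ((C * 2 powr (real_of_int k / 2) * Xsb_norm b f * Xsb_norm b g)\<^sup>2))"
proof -
  define Phi where "Phi = (\<integral>\<^sup>+s. ennreal (phi b s) \<partial>lborel)"
  have Phi_fin: "Phi < \<infinity>" unfolding Phi_def using Phi_fin assms .
  define P where "P = enn2real Phi"
  have PhiP: "Phi = ennreal P" unfolding P_def using Phi_fin by (simp add: ennreal_enn2real_if less_top)
  have P0: "0 \<le> P" unfolding P_def by simp
  define C where "C = sqrt (4/3 * P^2) + 1"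
  have C0: "C > 0" unfolding C_def by (simp add: add_nonneg_pos)
  show ?thesis
  proof (intro exI[of _ C] conjI[OF C0] allI impI)
    fix k :: int and f g :: "real \<times> real \<times> real \<Rightarrow> complex"
    assume fg: "in_X0b b f \<and> in_X0b b g"
    have fm[measurable]: "f \<in> borel_measurable borel" and gm[measurable]: "g \<in> borel_measurable borel"
      using fg unfolding in_X0b_def by auto
    define NF where "NF = (\<integral>\<^sup>+w. ennreal ((Fp b f w)^2) \<partial>lborel)"
    define NG where "NG = (\<integral>\<^sup>+w. ennreal ((Fp b g w)^2) \<partial>lborel)"
    have NFf: "NF < \<infinity>" and NGf: "NG < \<infinity>" using fg unfolding in_X0b_def NF_def NG_def Xsb_Fp by auto
    have NFe: "NF = ennreal ((Xsb_norm b f)^2)"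
      unfolding Xsb_norm_def Xsb_Fp NF_def[symmetric] using NFf by (simp add: ennreal_enn2real_if less_top)
    have NGe: "NG = ennreal ((Xsb_norm b g)^2)"
      unfolding Xsb_norm_def Xsb_Fp NG_def[symmetric] using NGf by (simp add: ennreal_enn2real_if less_top)
    define R where "R = 2 powr (real_of_int k)"
    have R0: "0 \<le> R" unfolding R_def by simp
    define T where "T = ennreal ((C * 2 powr (real_of_int k / 2) * Xsb_norm b f * Xsb_norm b g)\<^sup>2)"
    have key: "ennreal (2/3) * Phi^2 * ennreal (2*R) * (NF * NG) \<le> T"
      unfolding T_def NFe NGe PhiP R_def by (rule final_arith[OF P0 C_def])
    have Tfin: "T < \<infinity>" unfolding T_def by simp
    have finB: "ennreal (2/3) * Phi^2 * ennreal (2*R') * (NF * NG) < \<infinity>" for R'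
      using Phi_fin NFf NGf by (simp add: ennreal_mult_less_top power_less_top_ennreal)
    have E1: "(\<integral>\<^sup>+w. (Abs (Py k f) g w)^2 \<partial>lborel) \<le> ennreal (2/3) * Phi^2 * ennreal (2*R) * (NF * NG)"
      unfolding Phi_def NF_def NG_def
      by (rule est12[where ch="\<lambda>w e. indicator {-R..R} e"])
         (auto simp: ind_sq_int0 R0 Abs_def bil_Py1 norm_bil_integrand[of f g _ _ b] R_def mult_ac)
    have E2: "(\<integral>\<^sup>+w. (Abs f (Py k g) w)^2 \<partial>lborel) \<le> ennreal (2/3) * Phi^2 * ennreal (2*R) * (NF * NG)"
      unfolding Phi_def NF_def NG_def
      by (rule est12[where ch="\<lambda>w e. indicator {-R..R} (snd (snd w) - e)"])
         (auto simp: ind_sq_int R0 Abs_def bil_Py2 norm_bil_integrand[of f g _ _ b] R_def mult_ac)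
    have E3: "(\<integral>\<^sup>+w. indicator {-R'..R'} (snd (snd w)) * (Abs f g w)^2 \<partial>lborel) \<le> ennreal (2/3) * Phi^2 * ennreal (2*R') * (NF * NG)"
      if "0 \<le> R'" for R'
      using est3[OF fm gm that NFf[unfolded NF_def]] unfolding Phi_def NF_def NG_def by (simp add: mult_ac)
    have Pyf_m[measurable]: "Py k f \<in> borel_measurable borel" unfolding Py_def by measurable
    have Pyg_m[measurable]: "Py k g \<in> borel_measurable borel" unfolding Py_def by measurable
    have D1: "bil_defined (Py k f) g"
    proof -
      have "AE w in lborel. w \<in> UNIV \<longrightarrow> integrable lborel (bil_integrand (Py k f) g w)"
        by (rule defined_of) (use E1 finB[of R] in \<open>auto\<close>)
      then show ?thesis unfolding bil_defined_def by simp
    qed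
    have D2: "bil_defined f (Py k g)"
    proof -
      have "AE w in lborel. w \<in> UNIV \<longrightarrow> integrable lborel (bil_integrand f (Py k g) w)"
        by (rule defined_of) (use E2 finB[of R] in \<open>auto\<close>)
      then show ?thesis unfolding bil_defined_def by simp
    qed
    have D3: "bil_defined f g"
    proof -
      have "\<forall>n::nat. AE w in lborel. w \<in> {w. snd (snd w) \<in> {-real n..real n}} \<longrightarrow> integrable lborel (bil_integrand f g w)"
      proof
        fix n :: nat
        have m: "{w::real \<times> real \<times> real. snd (snd w) \<in> {-real n..real n}} \<in> sets borel" by measurable
        have i: "indicator {w::real \<times> real \<times> real. snd (snd w) \<in> {-real n..real n}} w = (indicator {-real n..real n} (snd (snd w)) :: ennreal)" for w
          by (simp add: indicator_def)
        show "AE w in lborel. w \<in> {w. snd (snd w) \<in> {-real n..real n}} \<longrightarrow> integrable lborel (bil_integrand f g w)"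
          by (rule defined_of[OF fm gm m]) (simp only: i, rule le_less_trans[OF E3[of "real n"] finB[of "real n"]], simp)
      qed
      then have "AE w in lborel. \<forall>n::nat. w \<in> {w. snd (snd w) \<in> {-real n..real n}} \<longrightarrow> integrable lborel (bil_integrand f g w)"
        by (rule AE_all_countable[THEN iffD2])
      then have "AE w in lborel. integrable lborel (bil_integrand f g w)"
      proof eventually_elim
        case (elim w)
        obtain n :: nat where "\<bar>snd (snd w)\<bar> \<le> real n" using real_arch_simple by blast
        then show ?case using elim[rule_format, of n] by (auto simp: abs_le_iff)
      qed
      then show ?thesis unfolding bil_defined_def .
    qed
    have L1: "L2_norm_sq (bil (Py k f) g) \<le> T"
      using L2_le[of "Py k f" g] E1 key by (meson order.trans)
    have L2: "L2_norm_sq (bil f (Py k g)) \<le> T"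
      using L2_le[of f "Py k g"] E2 key by (meson order.trans)
    have L3: "L2_norm_sq (Py k (bil f g)) \<le> T"
      using L2_Py_le[of k f g] E3[OF R0] key unfolding R_def by (meson order.trans)
    show "(bil_defined (Py k f) g \<and>
      L2_norm_sq (bil (Py k f) g) \<le> ennreal ((C * 2 powr (real_of_int k / 2) * Xsb_norm b f * Xsb_norm b g)\<^sup>2)) \<and>
     (bil_defined f (Py k g) \<and>
      L2_norm_sq (bil f (Py k g)) \<le> ennreal ((C * 2 powr (real_of_int k / 2) * Xsb_norm b f * Xsb_norm b g)\<^sup>2)) \<and>
     (bil_defined f g \<and>
      L2_norm_sq (Py k (bil f g)) \<le> ennreal ((C * 2 powr (real_of_int k / 2) * Xsb_norm b f * Xsb_norm b g)\<^sup>2))"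
      using D1 D2 D3 L1 L2 L3 unfolding T_def by blast
  qed
qed

end
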